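(* Let $\mathcal R$ be a DCTRS and $\langle t,\pi'\rangle$ a safe pair such that $\langle t,\pi'\rangle\leftharpoondown_{\mathcal R}^{*}\langle s,\pi\rangle$ for some term $s$ and trace $\pi$. Then the derivation $\langle t,\pi'\rangle\leftharpoondown_{\mathcal R}^{*}\langle s,\pi\rangle$ is deterministic.
   Context: Terms $\mathcal T(\mathcal F,\mathcal V)$; $\mathrm{Pos}(t)$ positions ($\epsilon$ root), $t|_p$ subterm, $t[u]_p$ replacement, $\mathrm{Var}(t_1,\dots,t_n)$ the variables occurring in the $t_i$, $\mathrm{Dom}(\sigma)=\{x\mid x\sigma\ne x\}$. A DCTRS $\mathcal R$ is a finite set of labelled conditional rules $\beta: l\to r\Leftarrow s_1\twoheadrightarrow t_1,\dots,s_n\twoheadrightarrow t_n$ ($l\notin\mathcal V$) with $\mathrm{Var}(r)\subseteq\mathrm{Var}(l,s_1,\dots,s_n,t_1,\dots,t_n)$ and $\mathrm{Var}(s_i)\subseteq\mathrm{Var}(l,t_1,\dots,t_{i-1})$ for all $i$; labels are unique and rule variables are never renamed. For such a rule let $V_\beta=(\mathrm{Var}(l)\setminus\mathrm{Var}(r,s_1,\dots,s_n,t_1,\dots,t_n))\cup\bigcup_{i=1}^n(\mathrm{Var}(t_i)\setminus\mathrm{Var}(r,s_{i+1},\dots,s_n))$. Traces: $[\,]$ is a trace, and if $\pi,\pi_1,\dots,\pi_n$ are traces, $\beta$ labels a rule with $n$ conditions, $p$ is a position and $\sigma$ a ground substitution, then $\beta(p,\sigma,\pi_1,\dots,\pi_n):\pi$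 is a trace. A trace $\pi$ is safe iff for every trace term $\beta(p,\sigma,\pi_1,\dots,\pi_n)$ in $\pi$, $\sigma$ is ground with $\mathrm{Dom}(\sigma)=V_\beta$ and $\pi_1,\dots,\pi_n$ are safe; $\langle s,\pi\rangle$ ($s$ ground) is safe iff $\pi$ is. Backward reversible rewriting (least relation on safe pairs): $\langle t,\beta(p,\sigma',\pi_1,\dots,\pi_n):\pi\rangle\leftharpoondown_{\mathcal R}\langle s,\pi\rangle$ iff this pair is safe, $\beta: l\to r\Leftarrow s_1\twoheadrightarrow t_1,\dots,s_n\twoheadrightarrow t_n\in\mathcal R$, and there is a ground $\theta$ with $\mathrm{Dom}(\theta)=\mathrm{Var}(r,s_1,\dots,s_n)\setminus\mathrm{Dom}(\sigma')$, $t|_p=r\theta$, $\langle t_i\theta\sigma',\pi_i\rangle\leftharpoondown_{\mathcal R}^{*}\langle s_i\theta\sigma',[\,]\rangle$ for all $i$, and $s=t[l\theta\sigma']_p$. A step $\langle t,\pi'\rangle\leftharpoondown_{\mathcal R}\langle s,\pi\rangle$ is deterministic if there is no pair $\langle s'',\pi''\rangle\neq\langle s,\pi\rangle$ with $\langle t,\pi'\rangle\leftharpoondown_{\mathcal R}\langle s'',\pi''\rangle$ and, moreover, the subderivations for the conditions of the applied rule are deterministic; a derivation is deterministic if each of its steps is. *)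

theory Defs
  imports Main
begin

datatype ('f,'v) "term" = Var 'v | Fun 'f "('f,'v) term list"

type_synonym pos = "nat list"

fun vars_term :: "('f,'v) term \<Rightarrow> 'v set" where
  "vars_term (Var x) = {x}"
| "vars_term (Fun f ts) = \<Union> (set (map vars_term ts))"

definition ground :: "('f,'v) term \<Rightarrow> bool" where
  "ground t \<longleftrightarrow> vars_term t = {}"

text \<open>Positions (0-based argument indices; the root is the empty list).\<close>
inductive pos_of :: "('f,'v) term \<Rightarrow> pos \<Rightarrow> bool" where
  root: "pos_of t []"
| arg: "i < length ts \<Longrightarrow> pos_of (ts ! i) p \<Longrightarrow> pos_of (Fun f ts) (i # p)"

definition poss :: "('f,'v) term \<Rightarrow> pos set" where
  "poss t = {p. pos_of t p}"

fun subt_at :: "('f,'v) term \<Rightarrow> pos \<Rightarrow> ('f,'v) term" where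
  "subt_at t [] = t"
| "subt_at (Fun f ts) (i # p) = subt_at (ts ! i) p"
| "subt_at (Var x) (i # p) = undefined"

fun replace_at :: "('f,'v) term \<Rightarrow> pos \<Rightarrow> ('f,'v) term \<Rightarrow> ('f,'v) term" where
  "replace_at t [] u = u"
| "replace_at (Fun f ts) (i # p) u = Fun f (ts[i := replace_at (ts ! i) p u])"
| "replace_at (Var x) (i # p) u = undefined"

type_synonym ('f,'v) subst = "'v \<Rightarrow> ('f,'v) term"

fun subst_apply :: "('f,'v) term \<Rightarrow> ('f,'v) subst \<Rightarrow> ('f,'v) term" (infixl "\<cdot>" 67) where
  "Var x \<cdot> \<sigma> = \<sigma> x"
| "Fun f ts \<cdot> \<sigma> = Fun f (map (\<lambda>t. t \<cdot> \<sigma>) ts)"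

definition sdom :: "('f,'v) subst \<Rightarrow> 'v set" where
  "sdom \<sigma> = {x. \<sigma> x \<noteq> Var x}"

definition ground_subst :: "('f,'v) subst \<Rightarrow> bool" where
  "ground_subst \<sigma> \<longleftrightarrow> (\<forall>x \<in> sdom \<sigma>. ground (\<sigma> x))"

text \<open>A rule  label: lhs \<rightarrow> rhs \<Leftarrow> s1 \<twoheadrightarrow> t1, ..., sn \<twoheadrightarrow> tn ; conditions are pairs (si, ti).\<close>
datatype ('l,'f,'v) crule =
  CRule (label: 'l) (lhs: "('f,'v) term") (rhs: "('f,'v) term") (conds: "(('f,'v) term \<times> ('f,'v) term) list")

definition cond_vars_from :: "('l,'f,'v) crule \<Rightarrow> nat \<Rightarrow> 'v set" where
  "cond_vars_from \<rho> k = (\<Union>j \<in> {k..<length (conds \<rho>)}. vars_term (fst (conds \<rho> ! j)))"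

definition all_cond_vars :: "('l,'f,'v) crule \<Rightarrow> 'v set" where
  "all_cond_vars \<rho> = (\<Union>j < length (conds \<rho>). vars_term (fst (conds \<rho> ! j)) \<union> vars_term (snd (conds \<rho> ! j)))"

definition dctrs :: "('l,'f,'v) crule set \<Rightarrow> bool" where
  "dctrs R \<longleftrightarrow> finite R
     \<and> (\<forall>\<rho> \<in> R. \<forall>\<rho>' \<in> R. label \<rho> = label \<rho>' \<longrightarrow> \<rho> = \<rho>')
     \<and> (\<forall>\<rho> \<in> R. (\<forall>x. lhs \<rho> \<noteq> Var x)
          \<and> vars_term (rhs \<rho>) \<subseteq> vars_term (lhs \<rho>) \<union> all_cond_vars \<rho>
          \<and> (\<forall>i < length (conds \<rho>). vars_term (fst (conds \<rho> ! i)) \<subseteq>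
               vars_term (lhs \<rho>) \<union> (\<Union>j < i. vars_term (snd (conds \<rho> ! j)))))"

definition Vbeta :: "('l,'f,'v) crule \<Rightarrow> 'v set" where
  "Vbeta \<rho> = (vars_term (lhs \<rho>) - (vars_term (rhs \<rho>) \<union> all_cond_vars \<rho>))
     \<union> (\<Union>i < length (conds \<rho>). vars_term (snd (conds \<rho> ! i)) - (vars_term (rhs \<rho>) \<union> cond_vars_from \<rho> (Suc i)))"

datatype ('l,'f,'v) trace_term =
  TT 'l pos "('f,'v) subst" "('l,'f,'v) trace_term list list"

type_synonym ('l,'f,'v) trace = "('l,'f,'v) trace_term list"

inductive safe_tt :: "('l,'f,'v) crule set \<Rightarrow> ('l,'f,'v) trace_term \<Rightarrow> bool" for R where
  "\<rho> \<in> R \<Longrightarrow> label \<rho> = \<beta> \<Longrightarrow> length \<pi>s = length (conds \<rho>) \<Longrightarrow>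
   ground_subst \<sigma> \<Longrightarrow> sdom \<sigma> = Vbeta \<rho> \<Longrightarrow>
   (\<forall>\<pi> \<in> set \<pi>s. \<forall>\<tau> \<in> set \<pi>. safe_tt R \<tau>) \<Longrightarrow>
   safe_tt R (TT \<beta> p \<sigma> \<pi>s)"

definition safe_trace :: "('l,'f,'v) crule set \<Rightarrow> ('l,'f,'v) trace \<Rightarrow> bool" where
  "safe_trace R \<pi> \<longleftrightarrow> (\<forall>\<tau> \<in> set \<pi>. safe_tt R \<tau>)"

definition safe_pair :: "('l,'f,'v) crule set \<Rightarrow> ('f,'v) term \<times> ('l,'f,'v) trace \<Rightarrow> bool" where
  "safe_pair R c \<longleftrightarrow> ground (fst c) \<and> safe_trace R (snd c)"

text \<open>bstep R (t, \<pi>') (s, \<pi>) means  <t,\<pi>'> \<leftharpoondown>_R <s,\<pi>>.\<close>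
inductive bstep :: "('l,'f,'v) crule set \<Rightarrow> ('f,'v) term \<times> ('l,'f,'v) trace \<Rightarrow> ('f,'v) term \<times> ('l,'f,'v) trace \<Rightarrow> bool"
  for R where
  "safe_pair R (t, TT \<beta> p \<sigma>' \<pi>s # \<pi>) \<Longrightarrow> safe_pair R (s, \<pi>) \<Longrightarrow>
   \<rho> \<in> R \<Longrightarrow> label \<rho> = \<beta> \<Longrightarrow> length \<pi>s = length (conds \<rho>) \<Longrightarrow>
   ground_subst \<theta> \<Longrightarrow> sdom \<theta> = (vars_term (rhs \<rho>) \<union> cond_vars_from \<rho> 0) - sdom \<sigma>' \<Longrightarrow>
   p \<in> poss t \<Longrightarrow> subt_at t p = rhs \<rho> \<cdot> \<theta> \<Longrightarrow>
   (\<forall>i < length (conds \<rho>).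
      (bstep R)\<^sup>*\<^sup>* (snd (conds \<rho> ! i) \<cdot> \<theta> \<cdot> \<sigma>', \<pi>s ! i) (fst (conds \<rho> ! i) \<cdot> \<theta> \<cdot> \<sigma>', [])) \<Longrightarrow>
   s = replace_at t p (lhs \<rho> \<cdot> \<theta> \<cdot> \<sigma>') \<Longrightarrow>
   bstep R (t, TT \<beta> p \<sigma>' \<pi>s # \<pi>) (s, \<pi>)"

definition is_bderiv :: "('l,'f,'v) crule set \<Rightarrow> (('f,'v) term \<times> ('l,'f,'v) trace) list
    \<Rightarrow> ('f,'v) term \<times> ('l,'f,'v) trace \<Rightarrow> ('f,'v) term \<times> ('l,'f,'v) trace \<Rightarrow> bool" where
  "is_bderiv R cs a b \<longleftrightarrow> cs \<noteq> [] \<and> hd cs = a \<and> last cs = b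
     \<and> (\<forall>j < length cs - 1. bstep R (cs ! j) (cs ! Suc j))"

text \<open>A step is deterministic if it is the only backward step from its source and,
  for every way the step is justified (matching substitution \<theta>), every subderivation
  for the conditions of the applied rule consists of deterministic steps.\<close>
inductive det_step :: "('l,'f,'v) crule set \<Rightarrow> ('f,'v) term \<times> ('l,'f,'v) trace \<Rightarrow> ('f,'v) term \<times> ('l,'f,'v) trace \<Rightarrow> bool"
  for R where
  "bstep R (t, \<pi>') (s, \<pi>) \<Longrightarrow>
   (\<forall>c. bstep R (t, \<pi>') c \<longrightarrow> c = (s, \<pi>)) \<Longrightarrow>
   (\<forall>\<beta> p \<sigma>' \<pi>s \<rho> \<theta>. \<pi>' = TT \<beta> p \<sigma>' \<pi>s # \<pi> \<longrightarrow> \<rho> \<in> R \<longrightarrow> label \<rho> = \<beta> \<longrightarrow>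
      length \<pi>s = length (conds \<rho>) \<longrightarrow>
      ground_subst \<theta> \<longrightarrow> sdom \<theta> = (vars_term (rhs \<rho>) \<union> cond_vars_from \<rho> 0) - sdom \<sigma>' \<longrightarrow>
      p \<in> poss t \<longrightarrow> subt_at t p = rhs \<rho> \<cdot> \<theta> \<longrightarrow>
      (\<forall>i < length (conds \<rho>).
        (bstep R)\<^sup>*\<^sup>* (snd (conds \<rho> ! i) \<cdot> \<theta> \<cdot> \<sigma>', \<pi>s ! i) (fst (conds \<rho> ! i) \<cdot> \<theta> \<cdot> \<sigma>', [])) \<longrightarrow>
      s = replace_at t p (lhs \<rho> \<cdot> \<theta> \<cdot> \<sigma>') \<longrightarrow>
      (\<forall>i < length (conds \<rho>). \<forall>cs.
         is_bderiv R cs (snd (conds \<rho> ! i) \<cdot> \<theta> \<cdot> \<sigma>', \<pi>s ! i) (fst (conds \<rho> ! i) \<cdot> \<theta> \<cdot> \<sigma>', []) \<longrightarrow>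
         (\<forall>j < length cs - 1. det_step R (cs ! j) (cs ! Suc j)))) \<Longrightarrow>
   det_step R (t, \<pi>') (s, \<pi>)"

definition det_deriv :: "('l,'f,'v) crule set \<Rightarrow> (('f,'v) term \<times> ('l,'f,'v) trace) list \<Rightarrow> bool" where
  "det_deriv R cs \<longleftrightarrow> (\<forall>j < length cs - 1. det_step R (cs ! j) (cs ! Suc j))"

end

theory Submission
  imports Defs
begin

lemma subst_comp: "t \<cdot> \<theta> \<cdot> \<sigma> = t \<cdot> (\<lambda>x. \<theta> x \<cdot> \<sigma>)"
  by (induct t) auto

lemma subst_eq_vars: "(t \<cdot> \<sigma> = t \<cdot> \<tau>) \<longleftrightarrow> (\<forall>x\<in>vars_term t. \<sigma> x = \<tau> x)"
  by (induct t) (auto simp: map_eq_conv)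

lemma ground_id: "ground t \<Longrightarrow> t \<cdot> \<sigma> = t"
  by (induct t) (auto simp: ground_def intro: map_idI)

lemma comp_agree:
  assumes "sdom \<theta>1 = sdom \<theta>2" "ground_subst \<theta>1" "ground_subst \<theta>2"
    "\<theta>1 x \<cdot> \<sigma> = \<theta>2 x \<cdot> \<sigma>"
  shows "\<theta>1 x = \<theta>2 x"
proof (cases "x \<in> sdom \<theta>1")
  case True
  then have "ground (\<theta>1 x)" "ground (\<theta>2 x)" using assms(1-3) by (auto simp: ground_subst_def)
  then show ?thesis using assms(4) ground_id[of "\<theta>1 x" \<sigma>] ground_id[of "\<theta>2 x" \<sigma>]
    by simp
next
  case False
  then have "x \<notin> sdom \<theta>2" using assms(1) by simp
  then show ?thesis using False unfolding sdom_def by simp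
qed

lemma cvf_split: "k < length (conds \<rho>) \<Longrightarrow>
  cond_vars_from \<rho> k = vars_term (fst (conds \<rho> ! k)) \<union> cond_vars_from \<rho> (Suc k)"
proof -
  assume "k < length (conds \<rho>)"
  then have "{k..<length (conds \<rho>)} = insert k {Suc k..<length (conds \<rho>)}" by auto
  then show ?thesis unfolding cond_vars_from_def by simp
qed

lemma cvf_end: "cond_vars_from \<rho> (length (conds \<rho>)) = {}"
  unfolding cond_vars_from_def by auto

lemma vbeta_sub: "k < length (conds \<rho>) \<Longrightarrow>
  vars_term (snd (conds \<rho> ! k)) \<subseteq> Vbeta \<rho> \<union> vars_term (rhs \<rho>) \<union> cond_vars_from \<rho> (Suc k)"
  unfolding Vbeta_def by blast

lemma theta_unique:
  assumes s1: "sdom \<theta>1 = (vars_term (rhs \<rho>) \<union> cond_vars_from \<rho> 0) - sdom \<sigma>'"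
    and s2: "sdom \<theta>2 = (vars_term (rhs \<rho>) \<union> cond_vars_from \<rho> 0) - sdom \<sigma>'"
    and g1: "ground_subst \<theta>1" and g2: "ground_subst \<theta>2"
    and vb: "sdom \<sigma>' = Vbeta \<rho>"
    and r: "rhs \<rho> \<cdot> \<theta>1 = rhs \<rho> \<cdot> \<theta>2"
    and c: "\<And>i. i < length (conds \<rho>) \<Longrightarrow> snd (conds \<rho> ! i) \<cdot> \<theta>1 \<cdot> \<sigma>' = snd (conds \<rho> ! i) \<cdot> \<theta>2 \<cdot> \<sigma>'
        \<Longrightarrow> fst (conds \<rho> ! i) \<cdot> \<theta>1 \<cdot> \<sigma>' = fst (conds \<rho> ! i) \<cdot> \<theta>2 \<cdot> \<sigma>'"
  shows "\<theta>1 = \<theta>2"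
proof -
  have idS: "\<theta>1 x = Var x \<and> \<theta>2 x = Var x" if "x \<in> sdom \<sigma>'" for x
  proof -
    have "x \<notin> sdom \<theta>1" "x \<notin> sdom \<theta>2" using that s1 s2 by simp_all
    then show ?thesis unfolding sdom_def by simp
  qed
  have sd: "sdom \<theta>1 = sdom \<theta>2" using s1 s2 by simp
  have rv: "\<forall>x\<in>vars_term (rhs \<rho>). \<theta>1 x = \<theta>2 x" using r by (simp add: subst_eq_vars)
  have "\<forall>x\<in>vars_term (rhs \<rho>) \<union> cond_vars_from \<rho> k. \<theta>1 x = \<theta>2 x"
    if "k \<le> length (conds \<rho>)" for k
    using that
  proof (induct k rule: inc_induct)
    case base
    then show ?case using rv by (simp add: cvf_end)
  next
    case (step k)
    have "\<forall>x\<in>vars_term (snd (conds \<rho> ! k)). \<theta>1 x = \<theta>2 x"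
    proof
      fix x assume x: "x \<in> vars_term (snd (conds \<rho> ! k))"
      have "x \<in> sdom \<sigma>' \<or> x \<in> vars_term (rhs \<rho>) \<union> cond_vars_from \<rho> (Suc k)"
        using vbeta_sub[OF step(2)] x vb by blast
      then show "\<theta>1 x = \<theta>2 x"
      proof
        assume "x \<in> sdom \<sigma>'" from idS[OF this] show ?thesis by simp
      next
        assume "x \<in> vars_term (rhs \<rho>) \<union> cond_vars_from \<rho> (Suc k)"
        with step(3) show ?thesis by blast
      qed
    qed
    then have "snd (conds \<rho> ! k) \<cdot> \<theta>1 \<cdot> \<sigma>' = snd (conds \<rho> ! k) \<cdot> \<theta>2 \<cdot> \<sigma>'"
      by (simp add: subst_comp subst_eq_vars)
    then have "fst (conds \<rho> ! k) \<cdot> \<theta>1 \<cdot> \<sigma>' = fst (conds \<rho> ! k) \<cdot> \<theta>2 \<cdot> \<sigma>'"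
      using c step(2) by blast
    then have "\<forall>x\<in>vars_term (fst (conds \<rho> ! k)). \<theta>1 x \<cdot> \<sigma>' = \<theta>2 x \<cdot> \<sigma>'"
      by (simp add: subst_comp subst_eq_vars)
    then have "\<forall>x\<in>vars_term (fst (conds \<rho> ! k)). \<theta>1 x = \<theta>2 x"
      using comp_agree[OF sd g1 g2] by blast
    then show ?case using step(3) cvf_split[OF step(2)] by auto
  qed
  from this[of 0] have agr: "\<forall>x\<in>vars_term (rhs \<rho>) \<union> cond_vars_from \<rho> 0. \<theta>1 x = \<theta>2 x" by simp
  show ?thesis
  proof
    fix x show "\<theta>1 x = \<theta>2 x"
    proof (cases "x \<in> vars_term (rhs \<rho>) \<union> cond_vars_from \<rho> 0")
      case True then show ?thesis using agr by blast
    next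
      case False
      then have "x \<notin> sdom \<theta>1" "x \<notin> sdom \<theta>2" using s1 s2 by simp_all
      then show ?thesis unfolding sdom_def by simp
    qed
  qed
qed

lemma bstep_trace: "bstep R (t, \<pi>') c \<Longrightarrow> \<exists>\<tau>. \<pi>' = \<tau> # snd c"
  by (erule bstep.cases) auto

lemma bstep_inv: "bstep R (t, TT \<beta> p \<sigma>' \<pi>s # \<pi>) c \<Longrightarrow> \<exists>\<rho> \<theta>.
   c = (replace_at t p (lhs \<rho> \<cdot> \<theta> \<cdot> \<sigma>'), \<pi>) \<and> safe_pair R (t, TT \<beta> p \<sigma>' \<pi>s # \<pi>) \<and>
   \<rho> \<in> R \<and> label \<rho> = \<beta> \<and> length \<pi>s = length (conds \<rho>) \<and>
   ground_subst \<theta> \<and> sdom \<theta> = (vars_term (rhs \<rho>) \<union> cond_vars_from \<rho> 0) - sdom \<sigma>' \<and>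
   subt_at t p = rhs \<rho> \<cdot> \<theta> \<and>
   (\<forall>i < length (conds \<rho>).
      (bstep R)\<^sup>*\<^sup>* (snd (conds \<rho> ! i) \<cdot> \<theta> \<cdot> \<sigma>', \<pi>s ! i) (fst (conds \<rho> ! i) \<cdot> \<theta> \<cdot> \<sigma>', []))"
  by (erule bstep.cases) blast

lemma rt_uniq:
  assumes "\<forall>\<tau>\<in>set \<pi>0. \<forall>t \<pi> c1 c2. bstep R (t, \<tau>#\<pi>) c1 \<longrightarrow> bstep R (t, \<tau>#\<pi>) c2 \<longrightarrow> c1 = c2"
  shows "(bstep R)\<^sup>*\<^sup>* (u, \<pi>0) (a, []) \<Longrightarrow> (bstep R)\<^sup>*\<^sup>* (u, \<pi>0) (b, []) \<Longrightarrow> a = b"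
  using assms
proof (induct \<pi>0 arbitrary: u)
  case Nil
  have "\<And>x. (bstep R)\<^sup>*\<^sup>* (u, []) x \<Longrightarrow> x = (u, [])"
    by (erule converse_rtranclpE) (auto dest: bstep_trace)
  then have "(a, []) = (u, ([]::('a, 'b, 'c) trace_term list))" "(b, []) = (u, ([]::('a, 'b, 'c) trace_term list))"
    using Nil.prems by blast+
  then show ?case by simp
next
  case (Cons \<tau> \<pi>0)
  obtain c1 where b1: "bstep R (u, \<tau> # \<pi>0) c1" "(bstep R)\<^sup>*\<^sup>* c1 (a, [])"
    using Cons(2) by (cases rule: converse_rtranclpE) auto
  obtain c2 where b2: "bstep R (u, \<tau> # \<pi>0) c2" "(bstep R)\<^sup>*\<^sup>* c2 (b, [])"
    using Cons(3) by (cases rule: converse_rtranclpE) auto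
  have "c1 = c2" using b1(1) b2(1) Cons(4) by (metis list.set_intros(1))
  moreover have "snd c1 = \<pi>0" using bstep_trace[OF b1(1)] by auto
  ultimately show ?case using Cons b1 b2 by (metis list.set_intros(2) prod.collapse)
qed

lemma uniq_core:
  assumes labels: "\<forall>\<rho>\<in>R. \<forall>\<rho>'\<in>R. label \<rho> = label \<rho>' \<longrightarrow> \<rho> = \<rho>'"
  shows "\<forall>t \<pi> c1 c2. bstep R (t, \<tau>#\<pi>) c1 \<longrightarrow> bstep R (t, \<tau>#\<pi>) c2 \<longrightarrow> c1 = c2"
proof (induct \<tau>)
  case (TT \<beta> p \<sigma>' \<pi>s)
  show ?case
  proof (intro allI impI)
    fix t \<pi> c1 c2
    assume B1: "bstep R (t, TT \<beta> p \<sigma>' \<pi>s # \<pi>) c1" and B2: "bstep R (t, TT \<beta> p \<sigma>' \<pi>s # \<pi>) c2"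
    from bstep_inv[OF B1] obtain \<rho>1 \<theta>1 where I1:
      "c1 = (replace_at t p (lhs \<rho>1 \<cdot> \<theta>1 \<cdot> \<sigma>'), \<pi>)" "safe_pair R (t, TT \<beta> p \<sigma>' \<pi>s # \<pi>)"
      "\<rho>1 \<in> R" "label \<rho>1 = \<beta>" "length \<pi>s = length (conds \<rho>1)"
      "ground_subst \<theta>1" "sdom \<theta>1 = (vars_term (rhs \<rho>1) \<union> cond_vars_from \<rho>1 0) - sdom \<sigma>'"
      "subt_at t p = rhs \<rho>1 \<cdot> \<theta>1"
      "\<forall>i < length (conds \<rho>1).
      (bstep R)\<^sup>*\<^sup>* (snd (conds \<rho>1 ! i) \<cdot> \<theta>1 \<cdot> \<sigma>', \<pi>s ! i) (fst (conds \<rho>1 ! i) \<cdot> \<theta>1 \<cdot> \<sigma>', [])"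
      by blast
    from bstep_inv[OF B2] obtain \<rho>2 \<theta>2 where I2:
      "c2 = (replace_at t p (lhs \<rho>2 \<cdot> \<theta>2 \<cdot> \<sigma>'), \<pi>)"
      "\<rho>2 \<in> R" "label \<rho>2 = \<beta>"
      "ground_subst \<theta>2" "sdom \<theta>2 = (vars_term (rhs \<rho>2) \<union> cond_vars_from \<rho>2 0) - sdom \<sigma>'"
      "subt_at t p = rhs \<rho>2 \<cdot> \<theta>2"
      "\<forall>i < length (conds \<rho>2).
      (bstep R)\<^sup>*\<^sup>* (snd (conds \<rho>2 ! i) \<cdot> \<theta>2 \<cdot> \<sigma>', \<pi>s ! i) (fst (conds \<rho>2 ! i) \<cdot> \<theta>2 \<cdot> \<sigma>', [])"
      by blast
    have eq: "\<rho>2 = \<rho>1" using labels I1 I2 by blast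
    from I1(2) have "safe_tt R (TT \<beta> p \<sigma>' \<pi>s)" by (simp add: safe_pair_def safe_trace_def)
    then obtain \<rho>' where "\<rho>' \<in> R" "label \<rho>' = \<beta>" "sdom \<sigma>' = Vbeta \<rho>'"
      by (cases rule: safe_tt.cases) auto
    then have vb: "sdom \<sigma>' = Vbeta \<rho>1" using labels I1 by metis
    have "\<theta>1 = \<theta>2"
    proof (rule theta_unique[of \<theta>1 \<rho>1 \<sigma>' \<theta>2])
      show "rhs \<rho>1 \<cdot> \<theta>1 = rhs \<rho>1 \<cdot> \<theta>2" using I1 I2 eq by simp
      fix i assume i: "i < length (conds \<rho>1)"
        and e: "snd (conds \<rho>1 ! i) \<cdot> \<theta>1 \<cdot> \<sigma>' = snd (conds \<rho>1 ! i) \<cdot> \<theta>2 \<cdot> \<sigma>'"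
      have mem: "\<pi>s ! i \<in> set \<pi>s" using i I1(5) by simp
      show "fst (conds \<rho>1 ! i) \<cdot> \<theta>1 \<cdot> \<sigma>' = fst (conds \<rho>1 ! i) \<cdot> \<theta>2 \<cdot> \<sigma>'"
        apply (rule rt_uniq[of "\<pi>s ! i" R "snd (conds \<rho>1 ! i) \<cdot> \<theta>1 \<cdot> \<sigma>'"])
        using TT mem apply blast
        using I1(9) i apply blast
        using I2(7) i e eq by simp
    qed (use I1 I2 eq vb in auto)
    then show "c1 = c2" using I1 I2 eq by simp
  qed
qed

lemma deriv_trace:
  assumes "is_bderiv R cs (a, \<pi>0) b" "j < length cs"
  shows "snd (cs ! j) = drop j \<pi>0"
  using assms(2)
proof (induct j)
  case 0 then show ?case using assms(1) by (cases cs) (auto simp: is_bderiv_def)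
next
  case (Suc j)
  then have "bstep R (cs ! j) (cs ! Suc j)" using assms(1) by (auto simp: is_bderiv_def)
  from bstep_trace[of R "fst (cs!j)" "snd (cs!j)", simplified, OF this] Suc
  show ?case by (metis Suc_lessD drop_Suc list.sel(3) tl_drop)
qed

lemma det_core:
  assumes labels: "\<forall>\<rho>\<in>R. \<forall>\<rho>'\<in>R. label \<rho> = label \<rho>' \<longrightarrow> \<rho> = \<rho>'"
  shows "\<forall>t \<pi> c. bstep R (t, \<tau>#\<pi>) c \<longrightarrow> det_step R (t, \<tau>#\<pi>) c"
proof (induct \<tau>)
  case (TT \<beta> p \<sigma>' \<pi>s)
  show ?case
  proof (intro allI impI)
    fix t \<pi> c
    assume B: "bstep R (t, TT \<beta> p \<sigma>' \<pi>s # \<pi>) c"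
    obtain s \<pi>2 where c: "c = (s, \<pi>2)" by fastforce
    have sub: "\<forall>j < length cs - 1. det_step R (cs ! j) (cs ! Suc j)"
      if "i < length \<pi>s" "is_bderiv R cs (u, \<pi>s ! i) v" for i cs u v
    proof (intro allI impI)
      fix j assume j: "j < length cs - 1"
      then have st: "bstep R (cs ! j) (cs ! Suc j)" using that by (auto simp: is_bderiv_def)
      have tr: "snd (cs ! j) = drop j (\<pi>s ! i)" using deriv_trace[OF that(2)] j by simp
      from bstep_trace[of R "fst (cs!j)" "snd (cs!j)", simplified, OF st] obtain \<tau> where
        tau: "snd (cs ! j) = \<tau> # snd (cs ! Suc j)" by blast
      then have "\<tau> \<in> set (\<pi>s ! i)" using tr by (metis in_set_dropD list.set_intros(1))
      moreover have "\<pi>s ! i \<in> set \<pi>s" using that by simp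
      ultimately have IH: "\<forall>t \<pi> c. bstep R (t, \<tau>#\<pi>) c \<longrightarrow> det_step R (t, \<tau>#\<pi>) c"
        using TT by blast
      show "det_step R (cs ! j) (cs ! Suc j)"
        using IH st tau by (metis prod.collapse)
    qed
    show "det_step R (t, TT \<beta> p \<sigma>' \<pi>s # \<pi>) c"
      unfolding c
    proof (rule det_step.intros)
      show "bstep R (t, TT \<beta> p \<sigma>' \<pi>s # \<pi>) (s, \<pi>2)" using B c by simp
      show "\<forall>c'. bstep R (t, TT \<beta> p \<sigma>' \<pi>s # \<pi>) c' \<longrightarrow> c' = (s, \<pi>2)"
        using uniq_core[OF labels] B c by blast
      show "\<forall>\<beta>' p' \<sigma>'' \<pi>s' \<rho> \<theta>. TT \<beta> p \<sigma>' \<pi>s # \<pi> = TT \<beta>' p' \<sigma>'' \<pi>s' # \<pi>2 \<longrightarrow> \<rho> \<in> R \<longrightarrow> label \<rho> = \<beta>' \<longrightarrow>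
      length \<pi>s' = length (conds \<rho>) \<longrightarrow>
      ground_subst \<theta> \<longrightarrow> sdom \<theta> = (vars_term (rhs \<rho>) \<union> cond_vars_from \<rho> 0) - sdom \<sigma>'' \<longrightarrow>
      p' \<in> poss t \<longrightarrow> subt_at t p' = rhs \<rho> \<cdot> \<theta> \<longrightarrow>
      (\<forall>i < length (conds \<rho>).
        (bstep R)\<^sup>*\<^sup>* (snd (conds \<rho> ! i) \<cdot> \<theta> \<cdot> \<sigma>'', \<pi>s' ! i) (fst (conds \<rho> ! i) \<cdot> \<theta> \<cdot> \<sigma>'', [])) \<longrightarrow>
      s = replace_at t p' (lhs \<rho> \<cdot> \<theta> \<cdot> \<sigma>'') \<longrightarrow>
      (\<forall>i < length (conds \<rho>). \<forall>cs.
         is_bderiv R cs (snd (conds \<rho> ! i) \<cdot> \<theta> \<cdot> \<sigma>'', \<pi>s' ! i) (fst (conds \<rho> ! i) \<cdot> \<theta> \<cdot> \<sigma>'', []) \<longrightarrow>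
         (\<forall>j < length cs - 1. det_step R (cs ! j) (cs ! Suc j)))"
        using sub by auto
    qed
  qed
qed

theorem mainTheorem11:
  fixes R :: "('l,'f,'v) crule set"
  assumes "dctrs R"
    and "safe_pair R (t, \<pi>')"
    and "is_bderiv R cs (t, \<pi>') (s, \<pi>)"
  shows "det_deriv R cs"
  unfolding det_deriv_def
proof (intro allI impI)
  have labels: "\<forall>\<rho>\<in>R. \<forall>\<rho>'\<in>R. label \<rho> = label \<rho>' \<longrightarrow> \<rho> = \<rho>'"
    using assms(1) by (simp add: dctrs_def)
  fix j assume j: "j < length cs - 1"
  then have st: "bstep R (cs ! j) (cs ! Suc j)" using assms(3) by (auto simp: is_bderiv_def)
  from bstep_trace[of R "fst (cs!j)" "snd (cs!j)", simplified, OF st] obtain \<tau> where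
    tau: "snd (cs ! j) = \<tau> # snd (cs ! Suc j)" by blast
  show "det_step R (cs ! j) (cs ! Suc j)"
    using det_core[OF labels, of \<tau>] st tau by (metis prod.collapse)
qed

end
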